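(* Let $(G,k)$ be an instance of PITVD and let $x$ be a vertex such that there are $\ell\ge4$ distinct pendant trees $C_1,\dots,C_\ell$ attached to $x$. Let $Z=\bigcup_{j=4}^{\ell}C_j$. Then $(G,k)$ is a yes-instance of PITVD if and only if $(G-Z,k)$ is a yes-instance of PITVD.
   Context: PITVD: the input is an undirected multigraph $G$ (no self-loops) and an integer $k$; the question is whether there exists $X\subseteq V(G)$ with $|X|\le k$ such that $G-X$ is a simple graph and every connected component of $G-X$ is a proper interval graph or a tree. If $x$ is a cut vertex of $G$ and $C$ is a connected component of $G-x$ that is a tree such that $C\cup\{x\}$ induces a tree in $G$, then $C$ is called a pendant tree attached to $x$. *)

theory Defs
  imports Main "HOL-Library.Cardinality" Complex_Main
begin

type_synonym 'a mgraph = "'a set \<times> ('a \<Rightarrow> 'a \<Rightarrow> nat)"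

definition verts :: "'a mgraph \<Rightarrow> 'a set" where "verts G = fst G"
definition mult :: "'a mgraph \<Rightarrow> 'a \<Rightarrow> 'a \<Rightarrow> nat" where "mult G = snd G"

definition multigraph :: "'a mgraph \<Rightarrow> bool" where
  "multigraph G \<longleftrightarrow> finite (verts G)
     \<and> (\<forall>u v. mult G u v = mult G v u)
     \<and> (\<forall>v. mult G v v = 0)
     \<and> (\<forall>u v. mult G u v > 0 \<longrightarrow> u \<in> verts G \<and> v \<in> verts G)"

definition adj :: "'a mgraph \<Rightarrow> 'a \<Rightarrow> 'a \<Rightarrow> bool" where
  "adj G u v \<longleftrightarrow> mult G u v > 0"

definition simple :: "'a mgraph \<Rightarrow> bool" where
  "simple G \<longleftrightarrow> (\<forall>u v. mult G u v \<le> 1)"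

definition induced :: "'a mgraph \<Rightarrow> 'a set \<Rightarrow> 'a mgraph" where
  "induced G S = (verts G \<inter> S, \<lambda>u v. if u \<in> S \<and> v \<in> S then mult G u v else 0)"

definition delete :: "'a mgraph \<Rightarrow> 'a set \<Rightarrow> 'a mgraph" where
  "delete G X = induced G (verts G - X)"

definition reach :: "'a mgraph \<Rightarrow> 'a \<Rightarrow> 'a \<Rightarrow> bool" where
  "reach G = (adj G)\<^sup>*\<^sup>*"

definition connected :: "'a mgraph \<Rightarrow> bool" where
  "connected G \<longleftrightarrow> verts G \<noteq> {} \<and> (\<forall>u\<in>verts G. \<forall>v\<in>verts G. reach G u v)"

definition components :: "'a mgraph \<Rightarrow> 'a set set" where
  "components G = {{u. reach G v u} | v. v \<in> verts G}"

definition has_cycle :: "'a mgraph \<Rightarrow> bool" where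
  "has_cycle G \<longleftrightarrow> (\<exists>cs. length cs \<ge> 3 \<and> distinct cs \<and> set cs \<subseteq> verts G
       \<and> (\<forall>i < length cs - 1. adj G (cs ! i) (cs ! Suc i))
       \<and> adj G (last cs) (hd cs))"

definition is_tree :: "'a mgraph \<Rightarrow> bool" where
  "is_tree G \<longleftrightarrow> simple G \<and> connected G \<and> \<not> has_cycle G"

definition proper_interval :: "'a mgraph \<Rightarrow> bool" where
  "proper_interval G \<longleftrightarrow> simple G \<and>
     (\<exists>l r :: 'a \<Rightarrow> real.
        (\<forall>v\<in>verts G. l v \<le> r v)
      \<and> (\<forall>u\<in>verts G. \<forall>v\<in>verts G. u \<noteq> v \<longrightarrow>
            (adj G u v \<longleftrightarrow> max (l u) (l v) \<le> min (r u) (r v)))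
      \<and> (\<forall>u\<in>verts G. \<forall>v\<in>verts G.
            \<not> ({l v..r v} \<subset> {l u..r u})))"

definition pitvd_yes :: "'a mgraph \<Rightarrow> nat \<Rightarrow> bool" where
  "pitvd_yes G k \<longleftrightarrow> (\<exists>X \<subseteq> verts G. card X \<le> k \<and> simple (delete G X) \<and>
     (\<forall>C \<in> components (delete G X).
        proper_interval (induced (delete G X) C) \<or> is_tree (induced (delete G X) C)))"

definition cut_vertex :: "'a mgraph \<Rightarrow> 'a \<Rightarrow> bool" where
  "cut_vertex G x \<longleftrightarrow> x \<in> verts G \<and>
     card (components (delete G {x})) > card (components G)"

definition pendant_tree :: "'a mgraph \<Rightarrow> 'a \<Rightarrow> 'a set \<Rightarrow> bool" where
  "pendant_tree G x C \<longleftrightarrow> cut_vertex G x \<and> C \<in> components (delete G {x})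
     \<and> is_tree (induced G C) \<and> is_tree (induced G (C \<union> {x}))"

end

theory Submission
  imports Defs
begin

lemma verts_induced[simp]: "verts (induced G S) = verts G \<inter> S"
  by (simp add: induced_def verts_def)
lemma mult_induced[simp]: "mult (induced G S) u v = (if u \<in> S \<and> v \<in> S then mult G u v else 0)"
  by (simp add: induced_def mult_def)
lemma adj_induced[simp]: "adj (induced G S) u v \<longleftrightarrow> u \<in> S \<and> v \<in> S \<and> adj G u v"
  by (auto simp: adj_def)
lemma induced_induced[simp]: "induced (induced G A) B = induced G (A \<inter> B)"
  by (auto simp: induced_def verts_def mult_def fun_eq_iff)

lemma mg_sym: "multigraph G \<Longrightarrow> adj G u v \<Longrightarrow> adj G v u"
  by (simp add: multigraph_def adj_def)
lemma mg_verts: "multigraph G \<Longrightarrow> adj G u v \<Longrightarrow> u \<in> verts G \<and> v \<in> verts G"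
  by (auto simp: multigraph_def adj_def)
lemma mg_irrefl: "multigraph G \<Longrightarrow> \<not> adj G v v"
  by (simp add: multigraph_def adj_def)

lemma reach_mono:
  assumes "\<And>u v. adj H u v \<Longrightarrow> adj H' u v" "reach H u v" shows "reach H' u v"
  using assms(2) unfolding reach_def
  by (induction rule: rtranclp_induct) (auto intro: rtranclp.rtrancl_into_rtrancl assms(1))

lemma reach_sym:
  assumes "\<And>u v. adj H u v \<Longrightarrow> adj H v u" "reach H u v" shows "reach H v u"
  using assms(2) unfolding reach_def
  by (induction rule: rtranclp_induct) (auto intro: converse_rtranclp_into_rtranclp assms(1))

lemma reach_trans: "reach H u v \<Longrightarrow> reach H v w \<Longrightarrow> reach H u w"
  unfolding reach_def by auto

lemma reach_refl[simp]: "reach H u u"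
  unfolding reach_def by auto

lemma reach_step: "adj H u v \<Longrightarrow> reach H u v"
  unfolding reach_def by auto

lemma reach_ind_sym: "multigraph G \<Longrightarrow> reach (induced G S) u v \<Longrightarrow> reach (induced G S) v u"
  by (rule reach_sym) (auto dest: mg_sym)

lemma reach_closed:
  assumes "reach (induced G S) u w" "u \<in> D" "\<And>a b. a \<in> D \<Longrightarrow> b \<in> S \<Longrightarrow> adj G a b \<Longrightarrow> b \<in> D"
  shows "w \<in> D"
  using assms(1) unfolding reach_def
  by (induction rule: rtranclp_induct) (auto intro: assms)

lemma reach_in:
  assumes "multigraph G" "reach (induced G S) u w"
  shows "w = u \<or> (w \<in> S \<and> w \<in> verts G)"
  using assms(2) unfolding reach_def
  by (induction rule: rtranclp_induct) (auto dest: mg_verts[OF assms(1)])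

lemma comp_form: "C \<in> components H \<longleftrightarrow> (\<exists>v \<in> verts H. C = {u. reach H v u})"
  unfolding components_def by auto

lemma comp_sub:
  assumes "multigraph G" "C \<in> components (induced G S)"
  shows "C \<subseteq> S \<inter> verts G"
  using assms reach_in[OF assms(1)] unfolding comp_form by auto

lemma comp_sub_gen:
  assumes "C \<in> components (induced H S)"
  shows "C \<subseteq> S"
proof
  fix w assume "w \<in> C"
  then obtain v where v: "v \<in> verts H \<inter> S" "reach (induced H S) v w"
    using assms unfolding comp_form by auto
  from v(2) have "w = v \<or> w \<in> S" unfolding reach_def
    by (induction rule: rtranclp_induct) auto
  then show "w \<in> S" using v by auto
qed

lemma comp_rep:
  assumes "multigraph G" "C \<in> components (induced G S)" "w \<in> C"
  shows "C = {u. reach (induced G S) w u}"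
proof -
  obtain v where v: "C = {u. reach (induced G S) v u}" using assms(2) unfolding comp_form by auto
  have vw: "reach (induced G S) v w" using v assms(3) by auto
  have wv: "reach (induced G S) w v" using reach_ind_sym[OF assms(1) vw] .
  show ?thesis
  proof (intro set_eqI iffI)
    fix u assume "u \<in> C"
    then have "reach (induced G S) v u" using v by simp
    then show "u \<in> {u. reach (induced G S) w u}" using reach_trans[OF wv] by simp
  next
    fix u assume "u \<in> {u. reach (induced G S) w u}"
    then have "reach (induced G S) w u" by simp
    then show "u \<in> C" using v reach_trans[OF vw] by simp
  qed
qed

lemma comp_unique:
  assumes "multigraph G" "C \<in> components (induced G S)" "D \<in> components (induced G S)"
    "w \<in> C" "w \<in> D"
  shows "C = D"
  using comp_rep[OF assms(1,2,4)] comp_rep[OF assms(1,3,5)] by simp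

lemma comp_of:
  assumes "v \<in> S" "v \<in> verts G"
  shows "{u. reach (induced G S) v u} \<in> components (induced G S)"
  using assms unfolding comp_form by auto

lemma comp_connected:
  assumes mg: "multigraph G" and C: "C \<in> components (induced G S)"
  shows "connected (induced G C)"
proof -
  obtain v where v: "v \<in> verts G \<inter> S" "C = {u. reach (induced G S) v u}"
    using C unfolding comp_form by auto
  have sub: "C \<subseteq> S \<inter> verts G" using comp_sub[OF mg C] .
  have R: "reach (induced G C) v u" if "u \<in> C" for u
  proof -
    have "reach (induced G S) v u" using that v by auto
    then show ?thesis unfolding reach_def
    proof (induction rule: rtranclp_induct)
      case base then show ?case by auto
    next
      case (step a b)
      have "reach (induced G S) v a" "reach (induced G S) v b" using step(1) step(2) unfolding reach_def
        by (auto simp del: adj_induced intro: rtranclp.rtrancl_into_rtrancl)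
      then have "a \<in> C" "b \<in> C" using v by auto
      then have "adj (induced G C) a b" using step by auto
      then show ?case using step by (meson rtranclp.rtrancl_into_rtrancl)
    qed
  qed
  have "v \<in> C" using v by auto
  moreover have "reach (induced G C) u w" if "u \<in> C" "w \<in> C" for u w
    using reach_trans[OF reach_ind_sym[OF mg R[OF that(1)]] R[OF that(2)]] .
  ultimately show ?thesis unfolding connected_def using v(1) by auto
qed

lemma comp_closed:
  assumes mg: "multigraph G" and C: "C \<in> components (induced G S)"
    and "a \<in> C" "b \<in> S" "adj G a b"
  shows "b \<in> C"
proof -
  have "C = {u. reach (induced G S) a u}" using comp_rep[OF mg C assms(3)] .
  moreover have "a \<in> S" using comp_sub[OF mg C] assms(3) by auto
  ultimately show ?thesis using assms(4,5) reach_step[of "induced G S" a b] by auto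
qed

lemma comp_intro:
  assumes mg: "multigraph G" and "D \<subseteq> S" "D \<subseteq> verts G" "v \<in> D" "connected (induced G D)"
    and cl: "\<And>a b. a \<in> D \<Longrightarrow> b \<in> S \<Longrightarrow> adj G a b \<Longrightarrow> b \<in> D"
  shows "D \<in> components (induced G S)"
proof -
  have "D = {u. reach (induced G S) v u}"
  proof (intro set_eqI iffI)
    fix u assume "u \<in> D"
    then have "reach (induced G D) v u" using assms(3,4,5) unfolding connected_def by auto
    then show "u \<in> {u. reach (induced G S) v u}"
      using reach_mono[of "induced G D" "induced G S"] assms(2) by auto
  next
    fix u assume "u \<in> {u. reach (induced G S) v u}"
    then show "u \<in> D" using reach_closed[of G S v u D] assms(4) cl by auto
  qed
  moreover have "v \<in> S" "v \<in> verts G" using assms by auto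
  ultimately show ?thesis using comp_of[of v S G] by simp
qed

lemma simple_induced: "simple (induced G S) \<longleftrightarrow> (\<forall>u\<in>S. \<forall>v\<in>S. mult G u v \<le> 1)"
  unfolding simple_def by auto

definition good :: "'a mgraph \<Rightarrow> 'a set \<Rightarrow> bool" where
  "good H S \<longleftrightarrow> simple (induced H S) \<and>
     (\<forall>C \<in> components (induced H S). proper_interval (induced H C) \<or> is_tree (induced H C))"

lemma pitvd_good: "pitvd_yes H k \<longleftrightarrow> (\<exists>X \<subseteq> verts H. card X \<le> k \<and> good H (verts H - X))"
proof -
  have "induced (delete H X) C = induced H C" if "C \<in> components (delete H X)" for X C
    using comp_sub_gen[of C H "verts H - X"] that unfolding delete_def
    by (simp add: Int_absorb1)
  then show ?thesis unfolding pitvd_yes_def good_def delete_def by auto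
qed

lemma good_induced: "good (induced G A) S \<longleftrightarrow> good G (A \<inter> S)"
proof -
  have "induced G (A \<inter> C) = induced G C" if "C \<in> components (induced G (A \<inter> S))" for C
    using comp_sub_gen[OF that] by (simp add: Int_absorb1 inf.coboundedI1)
  then show ?thesis unfolding good_def by auto
qed

lemma PI_mono:
  assumes "proper_interval (induced G A)" "B \<subseteq> A"
  shows "proper_interval (induced G B)"
proof -
  obtain l r :: "'a \<Rightarrow> real" where
    m: "\<forall>v\<in>verts (induced G A). l v \<le> r v"
      "\<forall>u\<in>verts (induced G A). \<forall>v\<in>verts (induced G A). u \<noteq> v \<longrightarrow>
            (adj (induced G A) u v \<longleftrightarrow> max (l u) (l v) \<le> min (r u) (r v))"
      "\<forall>u\<in>verts (induced G A). \<forall>v\<in>verts (induced G A). \<not> ({l v..r v} \<subset> {l u..r u})"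
    and s: "simple (induced G A)"
    using assms(1) unfolding proper_interval_def by blast
  have "simple (induced G B)" using s assms(2) unfolding simple_induced by blast
  moreover
  have sub: "verts (induced G B) \<subseteq> verts (induced G A)" using assms(2) by auto
  have adjeq: "adj (induced G B) u v = adj (induced G A) u v"
    if "u \<in> verts (induced G B)" "v \<in> verts (induced G B)" for u v using assms(2) that by auto
  have "(\<forall>v\<in>verts (induced G B). l v \<le> r v)
      \<and> (\<forall>u\<in>verts (induced G B). \<forall>v\<in>verts (induced G B). u \<noteq> v \<longrightarrow>
            (adj (induced G B) u v \<longleftrightarrow> max (l u) (l v) \<le> min (r u) (r v)))
      \<and> (\<forall>u\<in>verts (induced G B). \<forall>v\<in>verts (induced G B). \<not> ({l v..r v} \<subset> {l u..r u}))"
  proof (intro conjI ballI impI)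
    fix v assume "v \<in> verts (induced G B)" then show "l v \<le> r v" using m(1) sub by blast
  next
    fix u v assume uv: "u \<in> verts (induced G B)" "v \<in> verts (induced G B)" "u \<noteq> v"
    then show "adj (induced G B) u v \<longleftrightarrow> max (l u) (l v) \<le> min (r u) (r v)"
      using m(2) sub adjeq[OF uv(1,2)] by blast
  next
    fix u v assume uv: "u \<in> verts (induced G B)" "v \<in> verts (induced G B)"
    then show "\<not> ({l v..r v} \<subset> {l u..r u})" using m(3) sub by blast
  qed
  ultimately show ?thesis unfolding proper_interval_def by blast
qed

lemma cycle_mono:
  assumes "has_cycle H" "verts H \<subseteq> verts H'" "\<And>u v. adj H u v \<Longrightarrow> adj H' u v"
  shows "has_cycle H'"
  using assms unfolding has_cycle_def by (meson order_trans)

lemma cycle_induced_mono: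
  assumes "has_cycle (induced G B)" "B \<subseteq> A"
  shows "has_cycle (induced G A)"
  by (rule cycle_mono[OF assms(1)]) (use assms(2) in auto)

lemma tree_mono:
  assumes "is_tree (induced G A)" "B \<subseteq> A" "connected (induced G B)"
  shows "is_tree (induced G B)"
  using assms cycle_induced_mono[of G B A] unfolding is_tree_def simple_induced by blast

lemma good_mono:
  assumes mg: "multigraph G" and g: "good G S" and TS: "T \<subseteq> S"
  shows "good G T"
  unfolding good_def
proof (intro conjI ballI)
  show "simple (induced G T)" using g TS unfolding good_def simple_induced by blast
next
  fix C assume C: "C \<in> components (induced G T)"
  then obtain v where v: "v \<in> verts G \<inter> T" "C = {u. reach (induced G T) v u}"
    unfolding comp_form by auto
  define C' where "C' = {u. reach (induced G S) v u}"
  have C': "C' \<in> components (induced G S)" unfolding C'_def using comp_of[of v S G] v TS by auto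
  have "C \<subseteq> C'" unfolding C'_def using v(2) TS reach_mono[of "induced G T" "induced G S" v] by auto
  moreover have "proper_interval (induced G C') \<or> is_tree (induced G C')" using g C' unfolding good_def by auto
  ultimately show "proper_interval (induced G C) \<or> is_tree (induced G C)"
    using PI_mono tree_mono comp_connected[OF mg C] by blast
qed

lemma successively_nth: "successively P xs \<longleftrightarrow> (\<forall>i < length xs - 1. P (xs ! i) (xs ! Suc i))"
proof (induction xs rule: induct_list012)
  case (3 x y xs)
  show ?case
  proof
    assume "successively P (x # y # xs)"
    then show "\<forall>i < length (x # y # xs) - 1. P ((x # y # xs) ! i) ((x # y # xs) ! Suc i)"
      using 3 by (auto simp: less_Suc_eq_0_disj)
  next
    assume a: "\<forall>i < length (x # y # xs) - 1. P ((x # y # xs) ! i) ((x # y # xs) ! Suc i)"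
    have "P x y" using a[rule_format, of 0] by simp
    moreover have "\<forall>i < length (y # xs) - 1. P ((y # xs) ! i) ((y # xs) ! Suc i)"
    proof (intro allI impI)
      fix i assume "i < length (y # xs) - 1"
      then show "P ((y # xs) ! i) ((y # xs) ! Suc i)" using a[rule_format, of "Suc i"] by simp
    qed
    ultimately show "successively P (x # y # xs)" using 3 by simp
  qed
qed auto

lemma walk_reach:
  "successively (adj H) ps \<Longrightarrow> u \<in> set ps \<Longrightarrow> reach H (hd ps) u"
proof (induction ps)
  case (Cons a ps)
  show ?case
  proof (cases "u = a")
    case False
    then have u: "u \<in> set ps" and ne: "ps \<noteq> []" using Cons.prems by auto
    have "successively (adj H) ps" "adj H a (hd ps)" using Cons.prems(1) ne by (auto simp: successively_Cons)
    then have "reach H (hd ps) u" using Cons.IH u by blast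
    then show ?thesis using reach_trans[OF reach_step[OF \<open>adj H a (hd ps)\<close>]] by simp
  qed simp
qed simp

lemma cycle_reach:
  assumes mg: "multigraph G" and cs: "length cs \<ge> 3" "distinct cs" "set cs \<subseteq> verts G \<inter> S"
    "\<forall>i < length cs - 1. adj (induced G S) (cs ! i) (cs ! Suc i)"
    "adj (induced G S) (last cs) (hd cs)"
    and uw: "u \<in> set cs - {x}" "w \<in> set cs - {x}"
  shows "reach (induced G (S - {x})) u w"
proof -
  have sc: "successively (adj (induced G S)) cs" using cs(4) successively_nth by blast
  obtain ps where ps: "successively (adj (induced G S)) ps" "set ps = set cs - {x}" "x \<notin> set ps" "ps \<noteq> []"
  proof (cases "x \<in> set cs")
    case True
    then obtain as bs where ab: "cs = as @ x # bs" by (meson split_list)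
    have 1: "successively (adj (induced G S)) as" "successively (adj (induced G S)) bs"
      using sc unfolding ab by (auto simp: successively_append_iff successively_Cons)
    have "successively (adj (induced G S)) (bs @ as)"
    proof (cases "as = [] \<or> bs = []")
      case True then show ?thesis using 1 by auto
    next
      case False
      then have "last bs = last cs" "hd as = hd cs" unfolding ab by auto
      then show ?thesis using 1 False cs(5) by (auto simp: successively_append_iff)
    qed
    moreover have "set (bs @ as) = set cs - {x}" "x \<notin> set (bs @ as)" using cs(2) unfolding ab by auto
    moreover have "bs @ as \<noteq> []" using cs(1) unfolding ab by auto
    ultimately show ?thesis using that by blast
  next
    case False
    show ?thesis by (rule that[of cs]) (use sc False cs(1) in auto)
  qed
  have ps': "successively (adj (induced G (S - {x}))) ps"
  proof (rule successively_mono[OF ps(1)])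
    fix a b assume "a \<in> set ps" "b \<in> set ps" "adj (induced G S) a b"
    then show "adj (induced G (S - {x})) a b" using ps(3) by auto
  qed
  have "u \<in> set ps" "w \<in> set ps" using uw ps(2) by auto
  then show ?thesis
    using walk_reach[OF ps'] reach_ind_sym[OF mg] reach_trans by metis
qed

lemma claw_real:
  fixes a b a1 b1 a2 b2 a3 b3 :: real
  assumes "a1 \<le> b1" "a2 \<le> b2" "a3 \<le> b3"
    "max a a1 \<le> min b b1" "max a a2 \<le> min b b2" "max a a3 \<le> min b b3"
    "\<not> max a1 a2 \<le> min b1 b2" "\<not> max a1 a3 \<le> min b1 b3" "\<not> max a2 a3 \<le> min b2 b3"
  shows "(a < a1 \<and> b1 < b) \<or> (a < a2 \<and> b2 < b) \<or> (a < a3 \<and> b3 < b)"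
proof -
  have p12: "b1 < a2 \<or> b2 < a1" using assms(1,2,7) by (auto simp: max_def min_def split: if_splits)
  have p13: "b1 < a3 \<or> b3 < a1" using assms(1,3,8) by (auto simp: max_def min_def split: if_splits)
  have p23: "b2 < a3 \<or> b3 < a2" using assms(2,3,9) by (auto simp: max_def min_def split: if_splits)
  have q: "a \<le> b1" "a \<le> b2" "a \<le> b3" "a1 \<le> b" "a2 \<le> b" "a3 \<le> b" using assms(4-6) by auto
  show ?thesis using p12 p13 p23 q assms(1-3) by (elim disjE; smt (verit))
qed

lemma proper_sub:
  fixes a b c d :: real
  assumes "a < c" "d \<le> b" "c \<le> d"
  shows "{c..d} \<subset> {a..b}"
proof (rule psubsetI)
  show "{c..d} \<subseteq> {a..b}" using assms by auto
  have "a \<in> {a..b}" "a \<notin> {c..d}" using assms by auto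
  then show "{c..d} \<noteq> {a..b}" by blast
qed
lemma claw_not_PI:
  assumes "x \<in> verts H" "y1 \<in> verts H" "y2 \<in> verts H" "y3 \<in> verts H"
    "x \<noteq> y1" "x \<noteq> y2" "x \<noteq> y3" "y1 \<noteq> y2" "y1 \<noteq> y3" "y2 \<noteq> y3"
    "adj H x y1" "adj H x y2" "adj H x y3"
    "\<not> adj H y1 y2" "\<not> adj H y1 y3" "\<not> adj H y2 y3"
  shows "\<not> proper_interval H"
proof
  assume "proper_interval H"
  then obtain l r :: "'a \<Rightarrow> real" where
    m: "\<forall>v\<in>verts H. l v \<le> r v"
      "\<forall>u\<in>verts H. \<forall>v\<in>verts H. u \<noteq> v \<longrightarrow>
            (adj H u v \<longleftrightarrow> max (l u) (l v) \<le> min (r u) (r v))"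
      "\<forall>u\<in>verts H. \<forall>v\<in>verts H. \<not> ({l v..r v} \<subset> {l u..r u})"
    unfolding proper_interval_def by blast
  have e: "max (l x) (l y1) \<le> min (r x) (r y1)" "max (l x) (l y2) \<le> min (r x) (r y2)"
    "max (l x) (l y3) \<le> min (r x) (r y3)"
    "\<not> max (l y1) (l y2) \<le> min (r y1) (r y2)" "\<not> max (l y1) (l y3) \<le> min (r y1) (r y3)"
    "\<not> max (l y2) (l y3) \<le> min (r y2) (r y3)"
    using m(2) assms by blast+
  have lr: "l y1 \<le> r y1" "l y2 \<le> r y2" "l y3 \<le> r y3" using m(1) assms by blast+
  have nc: "\<not> ({l y..r y} \<subset> {l x..r x})" if "y \<in> verts H" for y using m(3) assms(1) that by blast
  have c: "(l x < l y1 \<and> r y1 < r x) \<or> (l x < l y2 \<and> r y2 < r x) \<or> (l x < l y3 \<and> r y3 < r x)"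
    by (rule claw_real[OF lr e])
  then show False
  proof (elim disjE conjE)
    assume "l x < l y1" "r y1 < r x"
    then have "{l y1..r y1} \<subset> {l x..r x}" using lr by (intro proper_sub) auto
    then show False using nc assms by blast
  next
    assume "l x < l y2" "r y2 < r x"
    then have "{l y2..r y2} \<subset> {l x..r x}" using lr by (intro proper_sub) auto
    then show False using nc assms by blast
  next
    assume "l x < l y3" "r y3 < r x"
    then have "{l y3..r y3} \<subset> {l x..r x}" using lr by (intro proper_sub) auto
    then show False using nc assms by blast
  qed
qed

lemma comp_ne: "C \<in> components H \<Longrightarrow> C \<noteq> {}"
  unfolding comp_form by (metis (no_types) empty_iff mem_Collect_eq reach_refl)

locale pend =
  fixes G :: "'a mgraph" and x :: 'a and l :: nat and C :: "nat \<Rightarrow> 'a set"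
  assumes mg: "multigraph G" and xV: "x \<in> verts G" and inj: "inj_on C {1..l}"
    and pt: "\<forall>j\<in>{1..l}. pendant_tree G x (C j)"
begin

lemma Cj_comp: "j \<in> {1..l} \<Longrightarrow> C j \<in> components (induced G (verts G - {x}))"
  using pt unfolding pendant_tree_def delete_def by auto

lemma Cj_sub: "j \<in> {1..l} \<Longrightarrow> C j \<subseteq> verts G - {x}"
  using comp_sub[OF mg Cj_comp] by auto

lemma Cj_ne: "j \<in> {1..l} \<Longrightarrow> C j \<noteq> {}"
  using Cj_comp[of j] unfolding comp_form by (metis (no_types) empty_iff mem_Collect_eq reach_refl)

lemma Cj_tree: "j \<in> {1..l} \<Longrightarrow> is_tree (induced G (C j))"
  using pt unfolding pendant_tree_def by auto

lemma Cj_treex: "j \<in> {1..l} \<Longrightarrow> is_tree (induced G (insert x (C j)))"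
  using pt unfolding pendant_tree_def by auto

lemma Cj_nbr: "j \<in> {1..l} \<Longrightarrow> a \<in> C j \<Longrightarrow> adj G a b \<Longrightarrow> b \<in> C j \<or> b = x"
  using comp_closed[OF mg Cj_comp, of j a b] mg_verts[OF mg, of a b] by auto

lemma Cj_disj: "i \<in> {1..l} \<Longrightarrow> j \<in> {1..l} \<Longrightarrow> i \<noteq> j \<Longrightarrow> C i \<inter> C j = {}"
  using comp_unique[OF mg Cj_comp Cj_comp, of i j] inj unfolding inj_on_def by blast

lemma Cj_reach:
  assumes "j \<in> {1..l}" "x \<notin> T" "reach (induced G T) a b" "a \<in> C j"
  shows "b \<in> C j"
  using reach_closed[OF assms(3,4)] Cj_nbr[OF assms(1)] assms(2) by blast

lemma x_nbr:
  assumes j: "j \<in> {1..l}" shows "\<exists>y \<in> C j. adj G x y"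
proof -
  obtain c where c: "c \<in> C j" using Cj_ne[OF j] by auto
  have cV: "c \<in> verts G" "c \<noteq> x" using Cj_sub[OF j] c by auto
  have "connected (induced G (insert x (C j)))" using Cj_treex[OF j] unfolding is_tree_def by auto
  then have "reach (induced G (insert x (C j))) x c" unfolding connected_def using c cV xV by auto
  then obtain y where y: "adj (induced G (insert x (C j))) x y"
    using cV(2) unfolding reach_def by (metis converse_rtranclpE)
  then have "y \<in> insert x (C j)" "adj G x y" by auto
  moreover have "y \<noteq> x" using mg_irrefl[OF mg] \<open>adj G x y\<close> by auto
  ultimately show ?thesis by auto
qed

lemma Cj_simple:
  assumes "j \<in> {1..l}" "u \<in> insert x (C j)" "v \<in> insert x (C j)"
  shows "mult G u v \<le> 1"
  using Cj_treex[OF assms(1)] assms(2,3) unfolding is_tree_def simple_induced by blast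

lemma Cj_sub_V: "j \<in> {1..l} \<Longrightarrow> C j \<subseteq> verts G"
  using Cj_sub by blast

lemma x_notin: "j \<in> {1..l} \<Longrightarrow> x \<notin> C j"
  using Cj_sub by blast

lemma glue:
  assumes g: "good G W" and WV: "W \<subseteq> verts G" and xW: "x \<notin> W" and J: "J \<subseteq> {1..l}"
    and dis: "\<forall>j\<in>J. W \<inter> C j = {}"
  shows "good G (W \<union> (\<Union>j\<in>J. C j))"
proof -
  define S where "S = W \<union> (\<Union>j\<in>J. C j)"
  have xS: "x \<notin> S" unfolding S_def using xW J x_notin by blast
  have simp: "mult G u v \<le> 1" if uS: "u \<in> S" and vS: "v \<in> S" for u v
  proof (cases "adj G u v")
    case False then show ?thesis by (simp add: adj_def)
  next
    case True
    show ?thesis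
    proof (cases "u \<in> W")
      case uW: True
      show ?thesis
      proof (cases "v \<in> W")
        case True then show ?thesis using g uW unfolding good_def simple_induced by blast
      next
        case False
        then obtain j where j: "j \<in> J" "v \<in> C j" using vS unfolding S_def by auto
        then have "u \<in> C j \<or> u = x" using Cj_nbr[of j v u] J mg_sym[OF mg True] by auto
        then show ?thesis using uW xW dis j by auto
      qed
    next
      case False
      then obtain j where j: "j \<in> J" "u \<in> C j" using uS unfolding S_def by auto
      then have "v \<in> C j \<or> v = x" using Cj_nbr[of j u v] J True by auto
      then have "v \<in> C j" using xS vS by auto
      then show ?thesis using Cj_simple[of j u v] j J by auto
    qed
  qed
  have comps: "proper_interval (induced G D) \<or> is_tree (induced G D)"
    if D: "D \<in> components (induced G S)" for D
  proof -
    obtain v where v: "v \<in> D" using comp_ne[OF D] by auto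
    have vS: "v \<in> S" using comp_sub[OF mg D] v by auto
    show ?thesis
    proof (cases "v \<in> W")
      case False
      then obtain j where j: "j \<in> J" "v \<in> C j" using vS unfolding S_def by auto
      have jl: "j \<in> {1..l}" using j J by auto
      have "C j \<in> components (induced G S)"
      proof (rule comp_intro[OF mg _ Cj_sub_V[OF jl] j(2)])
        show "C j \<subseteq> S" unfolding S_def using j by auto
        show "connected (induced G (C j))" using Cj_tree[OF jl] unfolding is_tree_def by auto
        fix a b assume "a \<in> C j" "b \<in> S" "adj G a b"
        then show "b \<in> C j" using Cj_nbr[OF jl] xS by blast
      qed
      then have "D = C j" using comp_unique[OF mg D _ v j(2)] by auto
      then show ?thesis using Cj_tree[OF jl] by auto
    next
      case True
      define D' where "D' = {u. reach (induced G W) v u}"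
      have D': "D' \<in> components (induced G W)" unfolding D'_def using comp_of[of v W G] True WV by auto
      have vD': "v \<in> D'" unfolding D'_def by auto
      have D'W: "D' \<subseteq> W" using comp_sub[OF mg D'] by auto
      have "D' \<in> components (induced G S)"
      proof (rule comp_intro[OF mg _ _ vD' comp_connected[OF mg D']])
        show "D' \<subseteq> S" using D'W unfolding S_def by auto
        show "D' \<subseteq> verts G" using D'W WV by auto
        fix a b assume ab: "a \<in> D'" "b \<in> S" "adj G a b"
        show "b \<in> D'"
        proof (cases "b \<in> W")
          case True then show ?thesis using comp_closed[OF mg D' ab(1) _ ab(3)] by auto
        next
          case False
          then obtain j where j: "j \<in> J" "b \<in> C j" using ab(2) unfolding S_def by auto
          then have "a \<in> C j \<or> a = x" using Cj_nbr[of j b a] J mg_sym[OF mg ab(3)] by auto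
          then show ?thesis using ab(1) D'W xW dis j by auto
        qed
      qed
      then have "D = D'" using comp_unique[OF mg D _ v vD'] by auto
      then show ?thesis using g D' unfolding good_def by auto
    qed
  qed
  show ?thesis unfolding S_def[symmetric] good_def simple_induced using simp comps by blast
qed

end

lemma cycle_restrict:
  assumes cs: "length cs \<ge> 3" "distinct cs" "set cs \<subseteq> verts (induced G T)"
   "\<forall>i < length cs - 1. adj (induced G T) (cs ! i) (cs ! Suc i)"
   "adj (induced G T) (last cs) (hd cs)" and sub: "set cs \<subseteq> A"
  shows "has_cycle (induced G A)"
  unfolding has_cycle_def
proof (intro exI[of _ cs] conjI)
  show "set cs \<subseteq> verts (induced G A)" using sub cs(3) by auto
  show "\<forall>i < length cs - 1. adj (induced G A) (cs ! i) (cs ! Suc i)"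
  proof (intro allI impI)
    fix i assume i: "i < length cs - 1"
    then have "cs ! i \<in> set cs" "cs ! Suc i \<in> set cs" by auto
    then show "adj (induced G A) (cs ! i) (cs ! Suc i)" using cs(4) i sub by auto
  qed
  have "cs \<noteq> []" using cs(1) by auto
  then have "last cs \<in> set cs" "hd cs \<in> set cs" by auto
  then show "adj (induced G A) (last cs) (hd cs)" using cs(5) sub by auto
qed (use cs in auto)

context pend begin

lemma caseC:
  assumes g: "good G W" and WV: "W \<subseteq> verts G" and xW: "x \<in> W" and l4: "l \<ge> 4"
    and dis: "\<forall>j\<in>{4..l}. W \<inter> C j = {}"
    and c123: "C 1 \<subseteq> W" "C 2 \<subseteq> W" "C 3 \<subseteq> W"
  shows "good G (W \<union> (\<Union>j\<in>{4..l}. C j))"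
proof -
  define Z where "Z = (\<Union>j\<in>{4..l}. C j)"
  define S where "S = W \<union> Z"
  define D where "D = {u. reach (induced G W) x u}"
  have D: "D \<in> components (induced G W)" unfolding D_def using comp_of[of x W G] xW xV by auto
  have xD: "x \<in> D" unfolding D_def by auto
  have DW: "D \<subseteq> W" using comp_sub[OF mg D] by auto
  have j4: "j \<in> {1..l}" if "j \<in> {4..l}" for j using that by auto
  have i3: "(1::nat) \<in> {1..l}" "(2::nat) \<in> {1..l}" "(3::nat) \<in> {1..l}" using l4 by auto
  have notPI: "\<not> proper_interval (induced G D)"
  proof -
    obtain y1 where y1: "y1 \<in> C 1" "adj G x y1" using x_nbr[OF i3(1)] by auto
    obtain y2 where y2: "y2 \<in> C 2" "adj G x y2" using x_nbr[OF i3(2)] by auto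
    obtain y3 where y3: "y3 \<in> C 3" "adj G x y3" using x_nbr[OF i3(3)] by auto
    have inD: "y \<in> D" if "y \<in> W" "adj G x y" for y
      unfolding D_def using that xW reach_step[of "induced G W" x y] by auto
    have yD: "y1 \<in> D" "y2 \<in> D" "y3 \<in> D" using inD y1 y2 y3 c123 by auto
    have yV: "y1 \<in> verts G" "y2 \<in> verts G" "y3 \<in> verts G" using mg_verts[OF mg] y1 y2 y3 by auto
    have nx: "x \<noteq> y1" "x \<noteq> y2" "x \<noteq> y3" using x_notin[OF i3(1)] x_notin[OF i3(2)] x_notin[OF i3(3)] y1 y2 y3 by auto
    have d12: "C 1 \<inter> C 2 = {}" "C 1 \<inter> C 3 = {}" "C 2 \<inter> C 3 = {}"
      using Cj_disj i3 by auto
    have ny: "y1 \<noteq> y2" "y1 \<noteq> y3" "y2 \<noteq> y3" using d12 y1 y2 y3 by auto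
    have na: "\<not> adj G y1 y2" "\<not> adj G y1 y3" "\<not> adj G y2 y3"
      using Cj_nbr[OF i3(1), of y1 y2] Cj_nbr[OF i3(1), of y1 y3] Cj_nbr[OF i3(2), of y2 y3]
        y1 y2 y3 d12 nx by auto
    show ?thesis
      by (rule claw_not_PI[of x _ y1 y2 y3]) (use xD yD yV xV nx ny na y1 y2 y3 in auto)
  qed
  have Dtree: "is_tree (induced G D)" using g D notPI unfolding good_def by auto
  have ZV: "Z \<subseteq> verts G" unfolding Z_def using Cj_sub_V j4 by blast
  have DZ: "D \<inter> Z = {}" unfolding Z_def using DW dis by auto
  have xZ: "x \<notin> Z" unfolding Z_def using x_notin j4 by blast
  have simp: "mult G u v \<le> 1" if uS: "u \<in> S" and vS: "v \<in> S" for u v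
  proof (cases "adj G u v")
    case False then show ?thesis by (simp add: adj_def)
  next
    case True
    show ?thesis
    proof (cases "u \<in> W")
      case uW: True
      show ?thesis
      proof (cases "v \<in> W")
        case True then show ?thesis using g uW unfolding good_def simple_induced by blast
      next
        case False
        then obtain j where j: "j \<in> {4..l}" "v \<in> C j" using vS unfolding S_def Z_def by auto
        then have "u \<in> C j \<or> u = x" using Cj_nbr[of j v u] j4 mg_sym[OF mg True] by auto
        then have "u = x" using uW dis j by auto
        then show ?thesis using Cj_simple[of j u v] j j4 by auto
      qed
    next
      case False
      then obtain j where j: "j \<in> {4..l}" "u \<in> C j" using uS unfolding S_def Z_def by auto
      then have "v \<in> C j \<or> v = x" using Cj_nbr[of j u v] j4 True by auto
      then show ?thesis using Cj_simple[of j u v] j j4 by auto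
    qed
  qed
  define T where "T = D \<union> Z"
  have TS: "T \<subseteq> S" unfolding T_def S_def using DW by auto
  have TV: "T \<subseteq> verts G" unfolding T_def using DW WV ZV by auto
  have Treach: "reach (induced G T) x u" if uT: "u \<in> T" for u
  proof (cases "u \<in> D")
    case True
    have "connected (induced G D)" using comp_connected[OF mg D] .
    then have "reach (induced G D) x u" unfolding connected_def using True xD xV DW WV by auto
    then show ?thesis using reach_mono[of "induced G D" "induced G T"] unfolding T_def by auto
  next
    case False
    then obtain j where j: "j \<in> {4..l}" "u \<in> C j" using uT unfolding T_def Z_def by auto
    have "connected (induced G (insert x (C j)))" using Cj_treex[of j] j j4 unfolding is_tree_def by auto
    then have "reach (induced G (insert x (C j))) x u"
      unfolding connected_def using j xV Cj_sub_V[of j] j4 by auto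
    moreover have "insert x (C j) \<subseteq> T" unfolding T_def Z_def using xD j by auto
    ultimately show ?thesis using reach_mono[of "induced G (insert x (C j))" "induced G T"] by auto
  qed
  have Tconn: "connected (induced G T)"
    unfolding connected_def
  proof (intro conjI ballI)
    show "verts (induced G T) \<noteq> {}" using xD xV unfolding T_def by auto
    fix u v assume "u \<in> verts (induced G T)" "v \<in> verts (induced G T)"
    then show "reach (induced G T) u v"
      using Treach reach_ind_sym[OF mg] reach_trans by (metis IntD2 verts_induced)
  qed
  have Tcyc: "\<not> has_cycle (induced G T)"
  proof
    assume "has_cycle (induced G T)"
    then obtain cs where cs: "length cs \<ge> 3" "distinct cs" "set cs \<subseteq> verts (induced G T)"
       "\<forall>i < length cs - 1. adj (induced G T) (cs ! i) (cs ! Suc i)"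
       "adj (induced G T) (last cs) (hd cs)"
      unfolding has_cycle_def by blast
    have "set cs - {x} \<noteq> {}"
    proof
      assume "set cs - {x} = {}"
      then have "set cs \<subseteq> {x}" by auto
      then have "card (set cs) \<le> 1" using card_mono[of "{x}" "set cs"] by auto
      then show False using cs(1) distinct_card[OF cs(2)] by auto
    qed
    then obtain u where u: "u \<in> set cs - {x}" by auto
    have R: "reach (induced G (T - {x})) u w" if "w \<in> set cs - {x}" for w
      using cycle_reach[OF mg cs(1,2) _ cs(4,5) u that] cs(3) by auto
    have uT: "u \<in> T" using u cs(3) by auto
    show False
    proof (cases "u \<in> D")
      case True
      have "w \<in> D - {x}" if "w \<in> set cs - {x}" for w
      proof (rule reach_closed[OF R[OF that]])
        show "u \<in> D - {x}" using True u by auto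
        fix a b assume ab: "a \<in> D - {x}" "b \<in> T - {x}" "adj G a b"
        show "b \<in> D - {x}"
        proof (cases "b \<in> D")
          case False
          then obtain j where j: "j \<in> {4..l}" "b \<in> C j" using ab(2) unfolding T_def Z_def by auto
          then have "a \<in> C j \<or> a = x" using Cj_nbr[of j b a] j4 mg_sym[OF mg ab(3)] by auto
          moreover have "a \<notin> C j" using ab(1) DZ j unfolding Z_def by blast
          ultimately show ?thesis using ab(1) by auto
        qed (use ab in auto)
      qed
      then have "set cs \<subseteq> D" using xD by auto
      then have "has_cycle (induced G D)" by (rule cycle_restrict[OF cs])
      then show False using Dtree unfolding is_tree_def by auto
    next
      case False
      then obtain j where j: "j \<in> {4..l}" "u \<in> C j" using uT unfolding T_def Z_def by auto
      have "w \<in> C j" if "w \<in> set cs - {x}" for w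
        using Cj_reach[OF j4[OF j(1)] _ R[OF that] j(2)] by auto
      then have sub: "set cs \<subseteq> insert x (C j)" by auto
      have "has_cycle (induced G (insert x (C j)))" by (rule cycle_restrict[OF cs sub])
      then show False using Cj_treex[OF j4[OF j(1)]] unfolding is_tree_def by auto
    qed
  qed
  have Ttree: "is_tree (induced G T)"
    unfolding is_tree_def simple_induced using Tconn Tcyc simp TS by blast
  have comps: "proper_interval (induced G F) \<or> is_tree (induced G F)"
    if F: "F \<in> components (induced G S)" for F
  proof -
    obtain v where v: "v \<in> F" using comp_ne[OF F] by auto
    have vS: "v \<in> S" using comp_sub[OF mg F] v by auto
    show ?thesis
    proof (cases "v \<in> T")
      case True
      have "T \<in> components (induced G S)"
      proof (rule comp_intro[OF mg TS TV True Tconn])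
        fix a b assume ab: "a \<in> T" "b \<in> S" "adj G a b"
        show "b \<in> T"
        proof (cases "a \<in> D")
          case True
          then show ?thesis
          proof (cases "b \<in> W")
            case True then show ?thesis using comp_closed[OF mg D \<open>a \<in> D\<close> _ ab(3)] unfolding T_def by auto
          next
            case False then show ?thesis using ab(2) unfolding S_def T_def by auto
          qed
        next
          case False
          then obtain j where j: "j \<in> {4..l}" "a \<in> C j" using ab(1) unfolding T_def Z_def by auto
          then have "b \<in> C j \<or> b = x" using Cj_nbr[of j a b] j4 ab(3) by auto
          then show ?thesis using xD j unfolding T_def Z_def by auto
        qed
      qed
      then have "F = T" using comp_unique[OF mg F _ v True] by auto
      then show ?thesis using Ttree by auto
    next
      case False
      then have vW: "v \<in> W" using vS unfolding S_def T_def by auto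
      define D' where "D' = {u. reach (induced G W) v u}"
      have D': "D' \<in> components (induced G W)" unfolding D'_def using comp_of[of v W G] vW WV by auto
      have vD': "v \<in> D'" unfolding D'_def by auto
      have D'W: "D' \<subseteq> W" using comp_sub[OF mg D'] by auto
      have "D' \<noteq> D" using vD' False unfolding T_def by auto
      then have "D' \<inter> D = {}" using comp_unique[OF mg D' D] by blast
      then have xD': "x \<notin> D'" using xD by auto
      have "D' \<in> components (induced G S)"
      proof (rule comp_intro[OF mg _ _ vD' comp_connected[OF mg D']])
        show "D' \<subseteq> S" using D'W unfolding S_def by auto
        show "D' \<subseteq> verts G" using D'W WV by auto
        fix a b assume ab: "a \<in> D'" "b \<in> S" "adj G a b"
        show "b \<in> D'"
        proof (cases "b \<in> W")
          case True then show ?thesis using comp_closed[OF mg D' ab(1) _ ab(3)] by auto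
        next
          case False
          then obtain j where j: "j \<in> {4..l}" "b \<in> C j" using ab(2) unfolding S_def Z_def by auto
          then have "a \<in> C j \<or> a = x" using Cj_nbr[of j b a] j4 mg_sym[OF mg ab(3)] by auto
          then show ?thesis using ab(1) D'W xD' dis j by blast
        qed
      qed
      then have "F = D'" using comp_unique[OF mg F _ v vD'] by auto
      then show ?thesis using g D' unfolding good_def by auto
    qed
  qed
  show ?thesis unfolding Z_def[symmetric] S_def[symmetric] good_def simple_induced using simp comps by blast
qed

end

theorem lemma21:
  fixes G :: "'a mgraph" and k :: nat and x :: 'a and l :: nat and C :: "nat \<Rightarrow> 'a set"
  assumes "multigraph G"
    and "x \<in> verts G"
    and "l \<ge> 4"
    and "inj_on C {1..l}"
    and "\<forall>j\<in>{1..l}. pendant_tree G x (C j)"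
    and "Z = (\<Union>j\<in>{4..l}. C j)"
  shows "pitvd_yes G k \<longleftrightarrow> pitvd_yes (delete G Z) k"
proof -
  interpret pend G x l C using assms(1,2,4,5) by unfold_locales
  define V where "V = verts G"
  have finV: "finite V" using assms(1) unfolding multigraph_def V_def by auto
  have j4: "j \<in> {1..l}" if "j \<in> {4..l}" for j using that by auto
  have ZV: "Z \<subseteq> V" unfolding assms(6) V_def using Cj_sub_V j4 by blast
  have xZ: "x \<notin> Z" unfolding assms(6) using x_notin j4 by blast
  have L: "pitvd_yes G k \<longleftrightarrow> (\<exists>X \<subseteq> V. card X \<le> k \<and> good G (V - X))"
    unfolding pitvd_good V_def ..
  have R: "pitvd_yes (delete G Z) k \<longleftrightarrow> (\<exists>X \<subseteq> V - Z. card X \<le> k \<and> good G (V - Z - X))"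
  proof -
    have e1: "verts (delete G Z) = V - Z" unfolding delete_def V_def by auto
    have e2: "good (delete G Z) (V - Z - X) = good G (V - Z - X)" for X
      unfolding delete_def good_induced V_def by (simp add: Int_absorb1 Diff_subset)
    show ?thesis unfolding pitvd_good e1 e2 ..
  qed
  show ?thesis unfolding L R
  proof
    assume "\<exists>X \<subseteq> V. card X \<le> k \<and> good G (V - X)"
    then obtain X where X: "X \<subseteq> V" "card X \<le> k" "good G (V - X)" by blast
    have "card (X - Z) \<le> card X" using X(1) finV by (intro card_mono) (auto dest: finite_subset)
    moreover have "V - Z - (X - Z) \<subseteq> V - X" by auto
    then have "good G (V - Z - (X - Z))" by (rule good_mono[OF assms(1) X(3)])
    ultimately show "\<exists>X \<subseteq> V - Z. card X \<le> k \<and> good G (V - Z - X)"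
      using X by (intro exI[of _ "X - Z"]) auto
  next
    assume "\<exists>X \<subseteq> V - Z. card X \<le> k \<and> good G (V - Z - X)"
    then obtain X' where X': "X' \<subseteq> V - Z" "card X' \<le> k" "good G (V - Z - X')" by blast
    define W where "W = V - Z - X'"
    have gW: "good G W" using X'(3) unfolding W_def .
    have WV: "W \<subseteq> V" unfolding W_def by auto
    have finX': "finite X'" using X'(1) finV finite_subset by blast
    define C123 where "C123 = (\<Union>j\<in>{1..3}. C j)"
    have i3: "j \<in> {1..l}" if "j \<in> {1..3}" for j using that assms(3) by auto
    have Uall: "(\<Union>j\<in>{1..l}. C j) = C123 \<union> Z"
    proof -
      have "{1..l} = {1..3} \<union> {4..l::nat}" using assms(3) by auto
      then show ?thesis unfolding C123_def assms(6) by auto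
    qed
    have C123V: "C123 \<subseteq> V" unfolding C123_def V_def using Cj_sub_V i3 by blast
    have xC123: "x \<notin> C123" unfolding C123_def using x_notin i3 by blast
    have C123Z: "C123 \<inter> Z = {}"
    proof -
      have "C i \<inter> C j = {}" if "i \<in> {1..3}" "j \<in> {4..l}" for i j
        using Cj_disj[of i j] that i3 j4 by auto
      then show ?thesis unfolding C123_def assms(6) by blast
    qed
    show "\<exists>X \<subseteq> V. card X \<le> k \<and> good G (V - X)"
    proof (cases "x \<in> X'")
      case True
      have "V - X' = W \<union> (\<Union>j\<in>{4..l}. C j)" unfolding W_def using ZV X'(1) assms(6) by auto
      moreover have "good G (W \<union> (\<Union>j\<in>{4..l}. C j))"
      proof (rule glue[OF gW])
        show "W \<subseteq> verts G" using WV unfolding V_def .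
        show "x \<notin> W" using True unfolding W_def by auto
        show "{4..l} \<subseteq> {1..l}" by auto
        show "\<forall>j\<in>{4..l}. W \<inter> C j = {}" unfolding W_def assms(6) by auto
      qed
      ultimately show ?thesis using X' by (intro exI[of _ X']) auto
    next
      case xX: False
      show ?thesis
      proof (cases "X' \<inter> C123 = {}")
        case False
        define X where "X = insert x (X' - C123)"
        have "X' - C123 \<subset> X'" using False by auto
        then have "card (X' - C123) < card X'" using finX' by (rule psubset_card_mono[rotated])
        moreover have "card X \<le> Suc (card (X' - C123))" unfolding X_def by (rule card_insert_le_m1) auto
        ultimately have cX: "card X \<le> k" using X'(2) by linarith
        have XV: "X \<subseteq> V" unfolding X_def using X'(1) assms(2) V_def by auto
        define W' where "W' = W - {x} - C123"
        have gW': "good G W'" unfolding W'_def by (rule good_mono[OF assms(1) gW]) auto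
        have eq: "V - X = W' \<union> (\<Union>j\<in>{1..l}. C j)"
          unfolding Uall W'_def W_def X_def using ZV C123V xC123 xZ X'(1) by auto
        have "good G (W' \<union> (\<Union>j\<in>{1..l}. C j))"
        proof (rule glue[OF gW'])
          show "W' \<subseteq> verts G" using WV unfolding V_def W'_def by auto
          show "x \<notin> W'" unfolding W'_def by auto
          show "\<forall>j\<in>{1..l}. W' \<inter> C j = {}"
          proof
            fix j assume j: "j \<in> {1..l}"
            have "C j \<subseteq> C123 \<union> Z" using Uall j by blast
            then show "W' \<inter> C j = {}" unfolding W'_def W_def by auto
          qed
        qed simp
        then show ?thesis using eq XV cX by (intro exI[of _ X]) auto
      next
        case True
        have "V - X' = W \<union> (\<Union>j\<in>{4..l}. C j)" unfolding W_def using ZV X'(1) assms(6) by auto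
        moreover have "good G (W \<union> (\<Union>j\<in>{4..l}. C j))"
        proof (rule caseC[OF gW _ _ assms(3)])
          show "W \<subseteq> verts G" using WV unfolding V_def .
          show "x \<in> W" unfolding W_def using xX xZ assms(2) V_def by auto
          show "\<forall>j\<in>{4..l}. W \<inter> C j = {}" unfolding W_def assms(6) by auto
          have CW: "C123 \<subseteq> W" unfolding W_def using C123V C123Z True by auto
          have CC: "C j \<subseteq> C123" if "j \<in> {1..3}" for j unfolding C123_def using that by (rule UN_upper)
          have "C 1 \<subseteq> C123" "C 2 \<subseteq> C123" "C 3 \<subseteq> C123" by (rule CC; simp)+
          then show "C 1 \<subseteq> W" "C 2 \<subseteq> W" "C 3 \<subseteq> W" using CW by blast+
        qed
        ultimately show ?thesis using X' by (intro exI[of _ X']) auto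
      qed
    qed
  qed
qed

end
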